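(* Let $t\ge1$ and $n=2(t+1)^2$. Let $\mathcal{C}_0\subseteq\mathbb{Z}_n^2$ be a linear $t$-error-correcting diameter perfect code with generator matrix $G_0$, and let $\mathcal{C}=\mathbf{x}+\mathcal{C}_0$ for some $\mathbf{x}=(x_1,x_2)\in\mathbb{Z}_n^2$. Suppose $\mathcal{C}$ is of Case I or Case II, and let $\mathcal{S}$ be the set of diameter perfect Sudoku grids with respect to $\mathcal{C}$ and its anticodes. (i) If $\mathcal{C}$ is of Case I, let $\mathcal{G}_\mathcal{S}=\langle \tau_1^{t+1}\tau_2^{t+1},\ \tau_2^{2(t+1)},\ \tau_2^{2x_2+1}s,\ \tau_1^{2x_1+2}\tau_2^{2x_2+1}r^2\rangle$. (ii) If $\mathcal{C}$ is of Case II and $G_0=[a~~b]$, let $\mathcal{G}_\mathcal{S}=\langle \tau_1^{a}\tau_2^{b},\ \tau_1^{2x_1+2}\tau_2^{2x_2+1}r^2\rangle$. Then in either case, for every $S\in\mathcal{S}$ and every $g\in\mathcal{G}_\mathcal{S}$, $g\cdot S\in\mathcal{S}$.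
   Context: $\mathbb{Z}_n$ is the integers modulo $n$; Lee weight $\mathrm{wt}_L(\mathbf{u})=\sum_i\min\{u_i,n-u_i\}$, Lee distance $d_L(\mathbf{u},\mathbf{v})=\mathrm{wt}_L(\mathbf{u}-\mathbf{v})$. A linear code is a submodule of $\mathbb{Z}_n^2$; its generator matrix has rows forming a minimal spanning set. Codes $\mathcal{C}_1,\mathcal{C}_2$ are equivalent if $\mathcal{C}_1P=\mathcal{C}_2$ for a permutation matrix $P$. For an adjacent pair $\{p_1,p_2\}$ (Lee distance 1), $\mathcal{A}_{2t+1}$ is the set of points at Lee distance at most $t$ from $p_1$ or $p_2$; $\{p_1,p_2\}$ is its core; in $\mathbb{Z}_n^2$ it has $2(t+1)^2=n$ points and is a maximum-size anticode of diameter $2t+1$. A $t$-error-correcting diameter perfect code here means a $(2t+1)$-diameter perfect code $\mathcal{C}\subseteq\mathbb{Z}_n^2$ with minimum distance $2t+2$ and anticode $\mathcal{A}_{2t+1}$, i.e. $|\mathcal{C}|\cdot|\mathcal{A}_{2t+1}|=n^2$, so $|\mathcal{C}|=n$. Case I: $\mathcal{C}_0$ is equivalent to the code $\mathcal{C}'$ generated by $\begin{bmatrix}t+1&t+1\\0&2(t+1)\end{bmatrix}$; Case II: $\mathcal{C}_0$ is equivalent to the code $\mathcal{C}''$ generated by $[1~~2t+1]$. Convention: for each codeword $\mathbf{c}$, the associated translate of $\mathcal{A}_{2t+1}$ has core $\{\mathbf{c},\mathbf{c}+(1,0)\}$; these $n$ translates partition $\mathbb{Z}_n^2$. Writing $\mathcal{C}=\{\mathbf{c}_1,\dots,\mathbf{c}_n\}$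 and $\mathcal{A}_i$ for the translate associated to $\mathbf{c}_i$, the palette grid $\mathcal{I}_{\mathcal{C},\mathcal{A}}$ is the $n\times n$ array (rows/columns indexed by $\mathbb{Z}_n$, position $(x,y)$ = row $x$, column $y$) with entry $i$ at each position of $\mathcal{A}_i$. Two $n\times n$ arrays over $n$-sets are orthogonal if all $n^2$ ordered pairs of corresponding entries are distinct. A diameter perfect Sudoku grid is a Latin square of order $n$ on $[n]$ orthogonal to $\mathcal{I}_{\mathcal{C},\mathcal{A}}$. Maps on arrays (indices mod $n$): $(r(A))_{i,j}=A_{n-1-j,i}$, $(s(A))_{i,j}=A_{i,n-1-j}$, $(\tau_1(A))_{i,j}=A_{i-1,j}$, $(\tau_2(A))_{i,j}=A_{i,j-1}$; the generated group acts by $\varphi\cdot A=\varphi(A)$. *)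

theory Defs
  imports Main
begin

text \<open>Elements of Z_n are represented by integers in {0..<n}; points of Z_n^2 by pairs.\<close>

definition zn2 :: "int \<Rightarrow> (int \<times> int) set" where
  "zn2 n = {0..<n} \<times> {0..<n}"

definition lee_wt1 :: "int \<Rightarrow> int \<Rightarrow> int" where
  "lee_wt1 n u = min (u mod n) (n - u mod n)"

definition lee_dist :: "int \<Rightarrow> int \<times> int \<Rightarrow> int \<times> int \<Rightarrow> int" where
  "lee_dist n u v = lee_wt1 n (fst u - fst v) + lee_wt1 n (snd u - snd v)"

definition addpt :: "int \<Rightarrow> int \<times> int \<Rightarrow> int \<times> int \<Rightarrow> int \<times> int" where
  "addpt n p q = ((fst p + fst q) mod n, (snd p + snd q) mod n)"

definition linear_code :: "int \<Rightarrow> (int \<times> int) set \<Rightarrow> bool" where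
  "linear_code n C \<longleftrightarrow> C \<subseteq> zn2 n \<and> (0, 0) \<in> C
     \<and> (\<forall>p\<in>C. \<forall>q\<in>C. addpt n p q \<in> C)
     \<and> (\<forall>k::int. \<forall>p\<in>C. ((k * fst p) mod n, (k * snd p) mod n) \<in> C)"

definition anticode :: "int \<Rightarrow> nat \<Rightarrow> int \<times> int \<Rightarrow> (int \<times> int) set" where
  "anticode n t c = {p \<in> zn2 n. lee_dist n p c \<le> int t \<or> lee_dist n p (addpt n c (1, 0)) \<le> int t}"

definition dp_code :: "int \<Rightarrow> nat \<Rightarrow> (int \<times> int) set \<Rightarrow> bool" where
  "dp_code n t C \<longleftrightarrow> C \<subseteq> zn2 n
     \<and> (\<forall>c\<in>C. \<forall>c'\<in>C. c \<noteq> c' \<longrightarrow> lee_dist n c c' \<ge> 2 * int t + 2)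
     \<and> (\<exists>c\<in>C. \<exists>c'\<in>C. c \<noteq> c' \<and> lee_dist n c c' = 2 * int t + 2)
     \<and> int (card C) * int (card (anticode n t (0, 0))) = n ^ 2"

text \<open>Equivalence via a 2x2 permutation matrix (identity or coordinate swap).\<close>
definition code_equiv :: "(int \<times> int) set \<Rightarrow> (int \<times> int) set \<Rightarrow> bool" where
  "code_equiv C1 C2 \<longleftrightarrow> C2 = C1 \<or> C2 = (\<lambda>(u, v). (v, u)) ` C1"

definition translate :: "int \<Rightarrow> int \<times> int \<Rightarrow> (int \<times> int) set \<Rightarrow> (int \<times> int) set" where
  "translate n x C = addpt n x ` C"

definition caseI_code :: "int \<Rightarrow> nat \<Rightarrow> (int \<times> int) set" where
  "caseI_code n t = {((k * (int t + 1)) mod n, (k * (int t + 1) + m * (2 * (int t + 1))) mod n) | k m. True}"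

definition row_code :: "int \<Rightarrow> int \<times> int \<Rightarrow> (int \<times> int) set" where
  "row_code n g = {((k * fst g) mod n, (k * snd g) mod n) | k. True}"

definition caseII_code :: "int \<Rightarrow> nat \<Rightarrow> (int \<times> int) set" where
  "caseII_code n t = row_code n (1, 2 * int t + 1)"

text \<open>Arrays: entry at row i, column j is A i j (indices read modulo n, only
  positions in {0..<n}^2 matter).\<close>
type_synonym array = "int \<Rightarrow> int \<Rightarrow> int"

text \<open>Palette grid, labelled by codewords: position p gets the codeword whose
  associated anticode translate contains p.\<close>
definition palette :: "int \<Rightarrow> nat \<Rightarrow> (int \<times> int) set \<Rightarrow> int \<times> int \<Rightarrow> int \<times> int" where
  "palette n t C p = (THE c. c \<in> C \<and> p \<in> anticode n t c)"

definition latin_square :: "int \<Rightarrow> array \<Rightarrow> bool" where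
  "latin_square n L \<longleftrightarrow>
     (\<forall>i\<in>{0..<n}. \<forall>j\<in>{0..<n}. L i j \<in> {1..n})
     \<and> (\<forall>i\<in>{0..<n}. inj_on (\<lambda>j. L i j) {0..<n})
     \<and> (\<forall>j\<in>{0..<n}. inj_on (\<lambda>i. L i j) {0..<n})"

definition orthogonal_to_palette :: "int \<Rightarrow> nat \<Rightarrow> (int \<times> int) set \<Rightarrow> array \<Rightarrow> bool" where
  "orthogonal_to_palette n t C L \<longleftrightarrow>
     inj_on (\<lambda>(i, j). (L i j, palette n t C (i, j))) (zn2 n)"

definition sudoku_grids :: "int \<Rightarrow> nat \<Rightarrow> (int \<times> int) set \<Rightarrow> array set" where
  "sudoku_grids n t C = {L. latin_square n L \<and> orthogonal_to_palette n t C L}"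

definition rot :: "int \<Rightarrow> array \<Rightarrow> array" where
  "rot n A = (\<lambda>i j. A ((n - 1 - j) mod n) (i mod n))"
definition sflip :: "int \<Rightarrow> array \<Rightarrow> array" where
  "sflip n A = (\<lambda>i j. A (i mod n) ((n - 1 - j) mod n))"
definition tau1 :: "int \<Rightarrow> array \<Rightarrow> array" where
  "tau1 n A = (\<lambda>i j. A ((i - 1) mod n) (j mod n))"
definition tau2 :: "int \<Rightarrow> array \<Rightarrow> array" where
  "tau2 n A = (\<lambda>i j. A (i mod n) ((j - 1) mod n))"

text \<open>Group generated by a set of maps. All maps involved have finite order, so the
  generated group coincides with the closure under identity and composition.\<close>
inductive_set gen_group :: "(array \<Rightarrow> array) set \<Rightarrow> (array \<Rightarrow> array) set" for G where
  gen_id: "id \<in> gen_group G"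
| gen_base: "g \<in> G \<Longrightarrow> g \<in> gen_group G"
| gen_comp: "f \<in> gen_group G \<Longrightarrow> g \<in> gen_group G \<Longrightarrow> f \<circ> g \<in> gen_group G"

end

theory Submission
  imports Defs
begin


definition aff :: "int \<Rightarrow> int \<Rightarrow> int \<Rightarrow> int \<Rightarrow> int \<Rightarrow> int \<times> int \<Rightarrow> int \<times> int" where
  "aff n e1 a e2 b p = ((e1 * fst p + a) mod n, (e2 * snd p + b) mod n)"

lemma lw_cong: "u mod n = v mod n \<Longrightarrow> lee_wt1 n u = lee_wt1 n v"
  by (simp add: lee_wt1_def)

lemma lw_neg: "(n::int) > 0 \<Longrightarrow> lee_wt1 n (-u) = lee_wt1 n u"
  by (simp add: lee_wt1_def zmod_zminus1_eq_if min.commute)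

lemma lw_le:
  assumes "(n::int) > 0" "w mod n = u mod n" shows "lee_wt1 n u \<le> \<bar>w\<bar>"
proof -
  obtain q r where w: "w = q * n + r" and r: "r = w mod n" "0 \<le> r" "r < n"
    using assms(1) by (metis div_mult_mod_eq pos_mod_sign pos_mod_bound add.commute)
  have qn: "q * n \<le> -n" if "q \<le> -1"
    using mult_right_mono[OF that, of n] assms(1) by simp
  show ?thesis
  proof (cases "w \<ge> 0")
    case True
    then have "q \<ge> 0" using w r qn by force
    then have "w \<ge> r" using w assms(1) by simp
    then show ?thesis using assms r True unfolding lee_wt1_def by simp
  next
    case False
    have "q \<ge> 0 \<Longrightarrow> q * n \<ge> 0" using assms(1) by simp
    then have "q \<ge> 0 \<Longrightarrow> w \<ge> 0" using w r by linarith
    then have "q \<le> -1" using False by linarith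
    then have "-w \<ge> n - r" using w qn by simp
    then show ?thesis using assms r False unfolding lee_wt1_def by simp
  qed
qed

lemma lw_ex:
  assumes "(n::int) > 0" shows "\<exists>w. w mod n = u mod n \<and> \<bar>w\<bar> = lee_wt1 n u"
proof (cases "u mod n \<le> n - u mod n")
  case True
  then show ?thesis using assms by (intro exI[of _ "u mod n"]) (simp add: lee_wt1_def)
next
  case False
  have "(u mod n - n) mod n = u mod n" by (simp add: mod_diff_eq[symmetric])
  moreover have "\<bar>u mod n - n\<bar> = n - u mod n" using assms pos_mod_bound[of n u] by (simp add: abs_if)
  ultimately show ?thesis using False by (intro exI[of _ "u mod n - n"]) (simp add: lee_wt1_def)
qed

lemma lw_tri:
  assumes "(n::int) > 0" shows "lee_wt1 n (u + v) \<le> lee_wt1 n u + lee_wt1 n v"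
proof -
  obtain w1 where w1: "w1 mod n = u mod n" "\<bar>w1\<bar> = lee_wt1 n u" using lw_ex assms by blast
  obtain w2 where w2: "w2 mod n = v mod n" "\<bar>w2\<bar> = lee_wt1 n v" using lw_ex assms by blast
  have "(w1 + w2) mod n = (u + v) mod n" using w1 w2 by (metis mod_add_eq)
  then have "lee_wt1 n (u+v) \<le> \<bar>w1 + w2\<bar>" using lw_le assms by blast
  then show ?thesis using w1 w2 by simp
qed

lemma ld_sym: "(n::int) > 0 \<Longrightarrow> lee_dist n p q = lee_dist n q p"
  unfolding lee_dist_def using lw_neg[of n "fst q - fst p"] lw_neg[of n "snd q - snd p"] by simp

lemma ld_tri: "(n::int) > 0 \<Longrightarrow> lee_dist n p r \<le> lee_dist n p q + lee_dist n q r"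
  unfolding lee_dist_def
  using lw_tri[of n "fst p - fst q" "fst q - fst r"] lw_tri[of n "snd p - snd q" "snd q - snd r"]
  by simp

lemma lw_pm: "(n::int) > 0 \<Longrightarrow> e \<in> {1, -1} \<Longrightarrow> lee_wt1 n (e * u) = lee_wt1 n u"
  using lw_neg by auto

lemma ld_aff:
  assumes "(n::int) > 0" "e1 \<in> {1,-1}" "e2 \<in> {1,-1}"
  shows "lee_dist n (aff n e1 a e2 b p) (aff n e1 a e2 b q) = lee_dist n p q"
proof -
  have 1: "((e1 * fst p + a) mod n - (e1 * fst q + a) mod n) mod n = (e1 * (fst p - fst q)) mod n"
    by (simp add: mod_diff_eq algebra_simps)
  have 2: "((e2 * snd p + b) mod n - (e2 * snd q + b) mod n) mod n = (e2 * (snd p - snd q)) mod n"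
    by (simp add: mod_diff_eq algebra_simps)
  show ?thesis unfolding lee_dist_def aff_def
    using lw_cong[OF 1] lw_cong[OF 2] lw_pm[OF assms(1) assms(2)] lw_pm[OF assms(1) assms(3)]
    by simp
qed

lemma ld_mod: "lee_dist n (fst p mod n, snd p mod n) q = lee_dist n p q"
  unfolding lee_dist_def by (intro arg_cong2[where f="(+)"] lw_cong) (simp_all add: mod_diff_left_eq)

lemma ld_mod2: "lee_dist n p (fst q mod n, snd q mod n) = lee_dist n p q"
  unfolding lee_dist_def by (intro arg_cong2[where f="(+)"] lw_cong) (simp_all add: mod_diff_right_eq)

lemma ld_e: "(n::int) \<ge> 2 \<Longrightarrow> lee_dist n c (addpt n c (1,0)) \<le> 1"
proof -
  assume n: "n \<ge> 2"
  have "lee_dist n c (addpt n c (1,0)) = lee_dist n c (fst c + 1, snd c)"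
    unfolding addpt_def using ld_mod2[of n c "(fst c + 1, snd c)"] by simp
  also have "\<dots> = lee_wt1 n (-1) + lee_wt1 n 0" unfolding lee_dist_def by simp
  also have "\<dots> = 1" using n unfolding lee_wt1_def by (simp add: zmod_zminus1_eq_if)
  finally show ?thesis by simp
qed



lemma aff_zn2: "(n::int) > 0 \<Longrightarrow> aff n e1 a e2 b p \<in> zn2 n"
  by (simp add: aff_def zn2_def)

lemma mod_mul_diff: "(e * (X mod n - a)) mod n = (e * (X - a)) mod (n::int)"
  by (metis mod_diff_left_eq mod_mult_right_eq)

lemma pm_cancel:
  assumes "e \<in> {1,-1::int}" "(e * i + a) mod n = (e * j + a) mod n"
  shows "i mod n = j mod n"
proof -
  have "(e * ((e * i + a) mod n - a)) mod n = (e * ((e * j + a) mod n - a)) mod n"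
    using assms(2) by (rule arg_cong)
  then have "(e * ((e * i + a) - a)) mod n = (e * ((e * j + a) - a)) mod n"
    by (simp only: mod_mul_diff)
  then show ?thesis using assms(1) by auto
qed
lemma aff_inj: "e1 \<in> {1,-1} \<Longrightarrow> e2 \<in> {1,-1} \<Longrightarrow> inj_on (aff n e1 a e2 b) (zn2 n)"
proof (rule inj_onI)
  fix p q assume e: "e1 \<in> {1,-1}" "e2 \<in> {1,-1}" and pq: "p \<in> zn2 n" "q \<in> zn2 n"
    and eq: "aff n e1 a e2 b p = aff n e1 a e2 b q"
  have "fst p mod n = fst q mod n"
    by (rule pm_cancel[OF e(1), where a=a]) (use eq in \<open>simp add: aff_def prod_eq_iff\<close>)
  moreover have "snd p mod n = snd q mod n"
    by (rule pm_cancel[OF e(2), where a=b]) (use eq in \<open>simp add: aff_def prod_eq_iff\<close>)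
  ultimately show "p = q" using pq by (simp add: zn2_def prod_eq_iff mem_Times_iff)
qed

lemma addpt_aff: "addpt n x u = aff n 1 (fst x) 1 (snd x) u"
  by (simp add: addpt_def aff_def add.commute)

lemma addpt_aff2: "addpt n c v = aff n 1 (fst v) 1 (snd v) c"
  by (simp add: addpt_def aff_def)

lemma aff_anticode:
  assumes n: "(n::int) \<ge> 2" and e: "e1 \<in> {1,-1}" "e2 \<in> {1,-1}"
    and h: "(aff n e1 a e2 b c = c' \<and> aff n e1 a e2 b (addpt n c (1,0)) = addpt n c' (1,0))
          \<or> (aff n e1 a e2 b c = addpt n c' (1,0) \<and> aff n e1 a e2 b (addpt n c (1,0)) = c')"
    and p: "p \<in> anticode n t c"
  shows "aff n e1 a e2 b p \<in> anticode n t c'"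
proof -
  have n0: "n > 0" using n by simp
  note d = ld_aff[OF n0 e, of a b]
  have "(lee_dist n (aff n e1 a e2 b p) c' = lee_dist n p c \<and>
         lee_dist n (aff n e1 a e2 b p) (addpt n c' (1,0)) = lee_dist n p (addpt n c (1,0)))
      \<or> (lee_dist n (aff n e1 a e2 b p) c' = lee_dist n p (addpt n c (1,0)) \<and>
         lee_dist n (aff n e1 a e2 b p) (addpt n c' (1,0)) = lee_dist n p c)"
  proof (rule disjE[OF h])
    assume A: "aff n e1 a e2 b c = c' \<and> aff n e1 a e2 b (addpt n c (1,0)) = addpt n c' (1,0)"
    show ?thesis using d[of p c] d[of p "addpt n c (1,0)"] A by simp
  next
    assume A: "aff n e1 a e2 b c = addpt n c' (1,0) \<and> aff n e1 a e2 b (addpt n c (1,0)) = c'"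
    show ?thesis using d[of p c] d[of p "addpt n c (1,0)"] A by simp
  qed
  then show ?thesis using p aff_zn2[OF n0, of e1 a e2 b p] unfolding anticode_def by auto
qed

lemma finite_zn2: "finite (zn2 n)" by (simp add: zn2_def)

lemma card_zn2: "(n::int) \<ge> 0 \<Longrightarrow> int (card (zn2 n)) = n ^ 2"
  by (simp add: zn2_def card_cartesian_product power2_eq_square)

lemma anticode_sub: "anticode n t c \<subseteq> zn2 n" by (auto simp: anticode_def)

lemma card_anticode_le:
  assumes n: "(n::int) \<ge> 2" and c: "c \<in> zn2 n" "c' \<in> zn2 n"
  shows "card (anticode n t c) \<le> card (anticode n t c')"
proof -
  define \<sigma> where "\<sigma> = aff n 1 (fst c' - fst c) 1 (snd c' - snd c)"
  have n0: "n > 0" using n by simp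
  have h1: "\<sigma> c = c'" using c unfolding \<sigma>_def aff_def zn2_def by (cases c') simp
  have h2: "\<sigma> (addpt n c (1,0)) = addpt n c' (1,0)"
    unfolding \<sigma>_def aff_def addpt_def by (simp add: mod_add_left_eq, simp add: add.commute)
  have sub: "\<sigma> ` anticode n t c \<subseteq> anticode n t c'"
  proof
    fix q assume "q \<in> \<sigma> ` anticode n t c"
    then obtain p where p: "p \<in> anticode n t c" "q = \<sigma> p" by blast
    have "aff n 1 (fst c' - fst c) 1 (snd c' - snd c) p \<in> anticode n t c'"
      by (rule aff_anticode[OF n _ _ _ p(1)]) (use h1 h2 in \<open>simp_all add: \<sigma>_def\<close>)
    then show "q \<in> anticode n t c'" using p(2) unfolding \<sigma>_def by simp
  qed
  have inj: "inj_on \<sigma> (anticode n t c)" unfolding \<sigma>_def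
    by (rule inj_on_subset[OF aff_inj anticode_sub]) simp_all
  show ?thesis
    by (rule card_inj_on_le[OF inj sub finite_subset[OF anticode_sub finite_zn2]])
qed

lemma tiling:
  assumes n: "(n::int) \<ge> 2"
    and C0: "C0 \<subseteq> zn2 n"
    and dist: "\<forall>c\<in>C0. \<forall>c'\<in>C0. c \<noteq> c' \<longrightarrow> lee_dist n c c' \<ge> 2 * int t + 2"
    and cardC: "int (card C0) * int (card (anticode n t (0, 0))) = n ^ 2"
    and C: "C = translate n x C0"
  shows "\<forall>p\<in>zn2 n. \<exists>!c. c \<in> C \<and> p \<in> anticode n t c"
proof -
  have n0: "n > 0" using n by simp
  have one: "(1::int) \<in> {1,-1}" by simp
  have Cz: "C \<subseteq> zn2 n" using C aff_zn2[OF n0] unfolding translate_def addpt_aff by auto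
  have distC: "lee_dist n c c' \<ge> 2 * int t + 2" if cc: "c \<in> C" "c' \<in> C" "c \<noteq> c'" for c c'
  proof -
    obtain u where "u \<in> C0" "c = addpt n x u"
      using cc C unfolding translate_def by auto
    moreover obtain u' where "u' \<in> C0" "c' = addpt n x u'"
      using cc C unfolding translate_def by auto
    ultimately have u: "u \<in> C0" "u' \<in> C0" "c = addpt n x u" "c' = addpt n x u'" by auto
    then have "u \<noteq> u'" using cc by auto
    then show ?thesis using dist u ld_aff[OF n0 one one] unfolding addpt_aff by auto
  qed
  have disj: "anticode n t c \<inter> anticode n t c' = {}" if "c \<in> C" "c' \<in> C" "c \<noteq> c'" for c c'
  proof (rule ccontr)
    assume "anticode n t c \<inter> anticode n t c' \<noteq> {}"
    then obtain p where p: "p \<in> anticode n t c" "p \<in> anticode n t c'" by blast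
    let ?e = "\<lambda>c. addpt n c (1,0)"
    have de: "lee_dist n (?e c) (?e c') = lee_dist n c c'"
      unfolding addpt_aff2 using ld_aff[OF n0 one one] by simp
    have e1: "lee_dist n c (?e c) \<le> 1" "lee_dist n c' (?e c') \<le> 1" using ld_e[OF n] by auto
    have e2: "lee_dist n (?e c') c' \<le> 1" using ld_e[OF n] ld_sym[OF n0] by metis
    have P1: "lee_dist n c p \<le> int t \<or> lee_dist n (?e c) p \<le> int t"
      using p(1) ld_sym[OF n0, of p] unfolding anticode_def by auto
    have P2: "lee_dist n p c' \<le> int t \<or> lee_dist n p (?e c') \<le> int t"
      using p(2) unfolding anticode_def by auto
    have t1: "lee_dist n c c' \<le> lee_dist n c p + lee_dist n p c'" by (rule ld_tri[OF n0])
    have t2: "lee_dist n c c' \<le> lee_dist n c (?e c) + lee_dist n (?e c) c'" by (rule ld_tri[OF n0])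
    have t3: "lee_dist n (?e c) c' \<le> lee_dist n (?e c) p + lee_dist n p c'" by (rule ld_tri[OF n0])
    have t4: "lee_dist n (?e c) (?e c') \<le> lee_dist n (?e c) p + lee_dist n p (?e c')" by (rule ld_tri[OF n0])
    have t5: "lee_dist n c c' \<le> lee_dist n c (?e c') + lee_dist n (?e c') c'" by (rule ld_tri[OF n0])
    have t6: "lee_dist n c (?e c') \<le> lee_dist n c p + lee_dist n p (?e c')" by (rule ld_tri[OF n0])
    have "lee_dist n c c' \<le> 2 * int t + 1"
      using P1 P2 by (elim disjE) (use t1 t2 t3 t4 t5 t6 e1 e2 de in linarith)+
    then show False using distC[OF that] by linarith
  qed
  have fin: "finite C" using Cz finite_subset finite_zn2 by blast
  have cardCC: "card C = card C0"
  proof -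
    have "inj_on (addpt n x) C0" unfolding addpt_aff
      using aff_inj[of 1 1 n] C0 by (auto intro: inj_on_subset)
    then show ?thesis using C unfolding translate_def by (simp add: card_image)
  qed
  have cardA: "card (anticode n t c) = card (anticode n t (0,0))" if "c \<in> C" for c
  proof -
    have "(0,0) \<in> zn2 n" using n0 by (simp add: zn2_def)
    then show ?thesis using card_anticode_le[OF n] Cz that by (meson le_antisym subsetD)
  qed
  have "card (\<Union>c\<in>C. anticode n t c) = (\<Sum>c\<in>C. card (anticode n t c))"
    by (rule card_UN_disjoint[OF fin]) (use finite_subset[OF anticode_sub finite_zn2] disj in auto)
  also have "\<dots> = card C * card (anticode n t (0,0))" using cardA by simp
  finally have "int (card (\<Union>c\<in>C. anticode n t c)) = n ^ 2" using cardC cardCC by simp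
  then have "card (\<Union>c\<in>C. anticode n t c) = card (zn2 n)" using card_zn2[of n] n0 by simp
  moreover have "(\<Union>c\<in>C. anticode n t c) \<subseteq> zn2 n" using anticode_sub by blast
  ultimately have U: "(\<Union>c\<in>C. anticode n t c) = zn2 n"
    using card_subset_eq[OF finite_zn2] by blast
  show ?thesis
  proof
    fix p assume "p \<in> zn2 n"
    then obtain c where "c \<in> C" "p \<in> anticode n t c" using U by blast
    then show "\<exists>!c. c \<in> C \<and> p \<in> anticode n t c" using disj by blast
  qed
qed




lemma pal_in:
  assumes U: "\<forall>p\<in>zn2 n. \<exists>!c. c \<in> C \<and> p \<in> anticode n t c" and p: "p \<in> zn2 n"
  shows "palette n t C p \<in> C \<and> p \<in> anticode n t (palette n t C p)"
  unfolding palette_def using theI'[OF U[rule_format, OF p]] .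

lemma pal_eq:
  assumes U: "\<forall>p\<in>zn2 n. \<exists>!c. c \<in> C \<and> p \<in> anticode n t c" and p: "p \<in> zn2 n"
    and c: "c \<in> C" "p \<in> anticode n t c"
  shows "palette n t C p = c"
  using pal_in[OF U p] U p c by blast

lemma transfer:
  assumes n: "(n::int) \<ge> 2" and e: "e1 \<in> {1,-1}" "e2 \<in> {1,-1}"
    and U: "\<forall>p\<in>zn2 n. \<exists>!c. c \<in> C \<and> p \<in> anticode n t c"
    and M: "\<forall>c\<in>C. \<exists>c'\<in>C.
      (aff n e1 a e2 b c = c' \<and> aff n e1 a e2 b (addpt n c (1,0)) = addpt n c' (1,0))
    \<or> (aff n e1 a e2 b c = addpt n c' (1,0) \<and> aff n e1 a e2 b (addpt n c (1,0)) = c')"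
    and S: "S \<in> sudoku_grids n t C"
    and B: "\<forall>i\<in>{0..<n}. \<forall>j\<in>{0..<n}. B i j = S ((e1 * i + a) mod n) ((e2 * j + b) mod n)"
  shows "B \<in> sudoku_grids n t C"
proof -
  have n0: "n > 0" using n by simp
  let ?\<sigma> = "aff n e1 a e2 b"
  have rng: "(x::int) mod n \<in> {0..<n}" for x using n0 by simp
  have SL: "latin_square n S" and SO: "orthogonal_to_palette n t C S"
    using S unfolding sudoku_grids_def by auto
  have lat: "latin_square n B"
    unfolding latin_square_def
  proof (intro conjI ballI)
    fix i j assume ij: "i \<in> {0..<n}" "j \<in> {0..<n}"
    show "B i j \<in> {1..n}" using B ij SL rng unfolding latin_square_def by simp
  next
    fix i assume i: "i \<in> {0..<n}"
    show "inj_on (\<lambda>j. B i j) {0..<n}"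
    proof (rule inj_onI)
      fix j j' assume j: "j \<in> {0..<n}" "j' \<in> {0..<n}" and eq: "B i j = B i j'"
      have "S ((e1 * i + a) mod n) ((e2 * j + b) mod n) = S ((e1 * i + a) mod n) ((e2 * j' + b) mod n)"
        using eq B i j by simp
      moreover have "inj_on (\<lambda>j. S ((e1 * i + a) mod n) j) {0..<n}"
        using SL rng[of "e1 * i + a"] unfolding latin_square_def by blast
      ultimately have "(e2 * j + b) mod n = (e2 * j' + b) mod n"
        using inj_onD rng by metis
      then have "j mod n = j' mod n" by (rule pm_cancel[OF e(2)])
      then show "j = j'" using j by simp
    qed
  next
    fix j assume j: "j \<in> {0..<n}"
    show "inj_on (\<lambda>i. B i j) {0..<n}"
    proof (rule inj_onI)
      fix i i' assume i: "i \<in> {0..<n}" "i' \<in> {0..<n}" and eq: "B i j = B i' j"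
      have "S ((e1 * i + a) mod n) ((e2 * j + b) mod n) = S ((e1 * i' + a) mod n) ((e2 * j + b) mod n)"
        using eq B i j by simp
      moreover have "inj_on (\<lambda>i. S i ((e2 * j + b) mod n)) {0..<n}"
        using SL rng[of "e2 * j + b"] unfolding latin_square_def by blast
      ultimately have "(e1 * i + a) mod n = (e1 * i' + a) mod n"
        using inj_onD rng by metis
      then have "i mod n = i' mod n" by (rule pm_cancel[OF e(1)])
      then show "i = i'" using i by simp
    qed
  qed
  have compat: "palette n t C (?\<sigma> p) = palette n t C (?\<sigma> q)"
    if pq: "p \<in> zn2 n" "q \<in> zn2 n" "palette n t C p = palette n t C q" for p q
  proof -
    define c where "c = palette n t C p"
    have c: "c \<in> C" "p \<in> anticode n t c" "q \<in> anticode n t c"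
      using pal_in[OF U pq(1)] pal_in[OF U pq(2)] pq(3) unfolding c_def by auto
    obtain c' where c': "c' \<in> C"
      "(?\<sigma> c = c' \<and> ?\<sigma> (addpt n c (1,0)) = addpt n c' (1,0))
    \<or> (?\<sigma> c = addpt n c' (1,0) \<and> ?\<sigma> (addpt n c (1,0)) = c')"
      using M c(1) by blast
    have "?\<sigma> p \<in> anticode n t c'" by (rule aff_anticode[OF n e c'(2) c(2)])
    moreover have "?\<sigma> q \<in> anticode n t c'" by (rule aff_anticode[OF n e c'(2) c(3)])
    ultimately show ?thesis using pal_eq[OF U aff_zn2[OF n0] c'(1)] by simp
  qed
  have orth: "orthogonal_to_palette n t C B"
    unfolding orthogonal_to_palette_def
  proof (rule inj_onI)
    fix p q assume p: "p \<in> zn2 n" and q: "q \<in> zn2 n"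
      and eq: "(case p of (i, j) \<Rightarrow> (B i j, palette n t C (i, j))) =
               (case q of (i, j) \<Rightarrow> (B i j, palette n t C (i, j)))"
    obtain i j where pij: "p = (i,j)" by (cases p)
    obtain i' j' where qij: "q = (i',j')" by (cases q)
    have ij: "i \<in> {0..<n}" "j \<in> {0..<n}" "i' \<in> {0..<n}" "j' \<in> {0..<n}"
      using p q pij qij by (auto simp: zn2_def)
    have e1': "S (fst (?\<sigma> p)) (snd (?\<sigma> p)) = S (fst (?\<sigma> q)) (snd (?\<sigma> q))"
      using eq B ij pij qij by (simp add: aff_def)
    have e2': "palette n t C (?\<sigma> p) = palette n t C (?\<sigma> q)"
      using compat[OF p q] eq pij qij by simp
    have "?\<sigma> p = ?\<sigma> q"
      by (rule inj_onD[OF SO[unfolded orthogonal_to_palette_def] _ aff_zn2[OF n0] aff_zn2[OF n0]])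
        (use e1' e2' in \<open>simp add: case_prod_beta\<close>)
    then show "p = q" using aff_inj[OF e] p q unfolding inj_on_def by blast
  qed
  show ?thesis using lat orth unfolding sudoku_grids_def by simp
qed




lemma tau1_pow:
  assumes "(n::int) > 0" "i \<in> {0..<n}" "j \<in> {0..<n}"
  shows "(tau1 n ^^ k) A i j = A ((i - int k) mod n) j"
  using assms(2,3)
proof (induction k arbitrary: i j)
  case 0 then show ?case by simp
next
  case (Suc k)
  have r: "(i - 1) mod n \<in> {0..<n}" using assms(1) by simp
  have "(tau1 n ^^ Suc k) A i j = (tau1 n ^^ k) A ((i - 1) mod n) (j mod n)"
    by (simp add: tau1_def)
  also have "\<dots> = (tau1 n ^^ k) A ((i - 1) mod n) j" using Suc.prems by simp
  also have "\<dots> = A (((i - 1) mod n - int k) mod n) j" using Suc.IH[OF r Suc.prems(2)] .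
  also have "\<dots> = A ((i - int (Suc k)) mod n) j" by (simp add: mod_diff_left_eq algebra_simps)
  finally show ?case .
qed

lemma tau2_pow:
  assumes "(n::int) > 0" "i \<in> {0..<n}" "j \<in> {0..<n}"
  shows "(tau2 n ^^ k) A i j = A i ((j - int k) mod n)"
  using assms(2,3)
proof (induction k arbitrary: i j)
  case 0 then show ?case by simp
next
  case (Suc k)
  have r: "(j - 1) mod n \<in> {0..<n}" using assms(1) by simp
  have "(tau2 n ^^ Suc k) A i j = (tau2 n ^^ k) A (i mod n) ((j - 1) mod n)"
    by (simp add: tau2_def)
  also have "\<dots> = (tau2 n ^^ k) A i ((j - 1) mod n)" using Suc.prems by simp
  also have "\<dots> = A i (((j - 1) mod n - int k) mod n)" using Suc.IH[OF Suc.prems(1) r] .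
  also have "\<dots> = A i ((j - int (Suc k)) mod n)" by (simp add: mod_diff_left_eq algebra_simps)
  finally show ?case .
qed

lemma sflip_at: "i \<in> {0..<n} \<Longrightarrow> sflip n A i j = A i ((n - 1 - j) mod n)"
  by (simp add: sflip_def)

lemma rot2_at:
  assumes "(n::int) > 0" "i \<in> {0..<n}" "j \<in> {0..<n}"
  shows "(rot n ^^ 2) A i j = A ((n - 1 - i) mod n) ((n - 1 - j) mod n)"
proof -
  have "(rot n ^^ 2) A = rot n (rot n A)" by (simp add: numeral_2_eq_2)
  then show ?thesis using assms by (simp add: rot_def)
qed

lemma gen_group_pres:
  assumes "\<forall>g\<in>G. \<forall>S\<in>X. g S \<in> X" "g \<in> gen_group G"
  shows "\<forall>S\<in>X. g S \<in> X"
  using assms(2) by induction (use assms(1) in auto)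




lemma t_trans1: "aff n 1 (-a) 1 (-b) (addpt n x u) = addpt n x (addpt n u ((-1 * (a mod n)) mod n, (-1*(b mod n)) mod n))"
  by (simp add: aff_def addpt_def mod_simps algebra_simps)

lemma t_trans2: "aff n 1 (-a) 1 (-b) (addpt n (addpt n x u) (1,0)) = addpt n (addpt n x (addpt n u ((-1 * (a mod n)) mod n, (-1*(b mod n)) mod n))) (1,0)"
  by (simp add: aff_def addpt_def mod_simps algebra_simps)

lemma t_refl1: "aff n 1 0 (-1) (2 * snd x) (addpt n x u) = addpt n x (fst u, (- snd u) mod n)"
  by (simp add: aff_def addpt_def mod_simps algebra_simps)

lemma t_refl2: "aff n 1 0 (-1) (2 * snd x) (addpt n (addpt n x u) (1,0)) = addpt n (addpt n x (fst u, (- snd u) mod n)) (1,0)"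
  by (simp add: aff_def addpt_def mod_simps algebra_simps)

lemma t_pt1: "aff n (-1) (2 * fst x + 1) (-1) (2 * snd x) (addpt n x u) = addpt n (addpt n x ((-1 * fst u) mod n, (-1 * snd u) mod n)) (1,0)"
  by (simp add: aff_def addpt_def mod_simps algebra_simps)

lemma t_pt2: "aff n (-1) (2 * fst x + 1) (-1) (2 * snd x) (addpt n (addpt n x u) (1,0)) = addpt n x ((-1 * fst u) mod n, (-1 * snd u) mod n)"
  by (simp add: aff_def addpt_def mod_simps algebra_simps)

lemma caseI_swap:
  assumes "(u, v) \<in> caseI_code n t" shows "(v, u) \<in> caseI_code n t"
proof -
  obtain k m where km: "u = (k * (int t + 1)) mod n" "v = (k * (int t + 1) + m * (2 * (int t + 1))) mod n"
    using assms unfolding caseI_code_def by auto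
  show ?thesis unfolding caseI_code_def
    by (rule CollectI, rule exI[of _ "k + 2 * m"], rule exI[of _ "-m"]) (simp add: km algebra_simps)
qed

lemma caseI_eq:
  assumes "code_equiv C0 (caseI_code n t)" shows "C0 = caseI_code n t"
proof -
  have sw: "(\<lambda>(u, v). (v, u)) ` caseI_code n t = caseI_code n t"
  proof
    show "(\<lambda>(u, v). (v, u)) ` caseI_code n t \<subseteq> caseI_code n t" using caseI_swap by auto
  next
    show "caseI_code n t \<subseteq> (\<lambda>(u, v). (v, u)) ` caseI_code n t"
    proof
      fix p assume "p \<in> caseI_code n t"
      then have "(snd p, fst p) \<in> caseI_code n t" using caseI_swap[of "fst p" "snd p"] by simp
      then show "p \<in> (\<lambda>(u, v). (v, u)) ` caseI_code n t" by (intro image_eqI[of _ _ "(snd p, fst p)"]) auto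
    qed
  qed
  have inv: "(\<lambda>(u, v). (v, u)) ` ((\<lambda>(u, v). (v, u)) ` C0) = C0" by (auto simp: image_iff)
  from assms show ?thesis unfolding code_equiv_def
  proof
    assume "caseI_code n t = (\<lambda>(u, v). (v, u)) ` C0"
    then have "(\<lambda>(u, v). (v, u)) ` caseI_code n t = C0" using inv by simp
    then show ?thesis using sw by simp
  qed simp
qed

lemma caseI_refl:
  assumes "(u, v) \<in> caseI_code n t" shows "(u, (- v) mod n) \<in> caseI_code n t"
proof -
  obtain k m where km: "u = (k * (int t + 1)) mod n" "v = (k * (int t + 1) + m * (2 * (int t + 1))) mod n"
    using assms unfolding caseI_code_def by auto
  have "(- v) mod n = (- (k * (int t + 1) + m * (2 * (int t + 1)))) mod n"
    using km(2) by (simp add: mod_minus_eq)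
  also have "\<dots> = (k * (int t + 1) + (- k - m) * (2 * (int t + 1))) mod n"
    by (simp add: algebra_simps)
  finally show ?thesis unfolding caseI_code_def
    by (intro CollectI exI[of _ k] exI[of _ "-k-m"]) (simp add: km)
qed

lemma caseI_mem1: "((int t + 1) mod n, (int t + 1) mod n) \<in> caseI_code n t"
  unfolding caseI_code_def by (intro CollectI exI[of _ 1] exI[of _ 0]) simp

lemma caseI_mem2: "(0 mod n, (2 * (int t + 1)) mod n) \<in> caseI_code n t"
  unfolding caseI_code_def by (intro CollectI exI[of _ 0] exI[of _ 1]) simp




lemma nm: "(n - 1 - X mod n) mod n = (-1 - X) mod (n::int)"
proof -
  have "(n - 1 - X mod n) mod n = (n - 1 - X) mod n" by (simp add: mod_diff_right_eq)
  also have "n - 1 - X = (-1 - X) + n" by simp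
  finally show ?thesis by simp
qed

lemma lin_scale: "linear_code n C0 \<Longrightarrow> p \<in> C0 \<Longrightarrow> ((k * fst p) mod n, (k * snd p) mod n) \<in> C0"
  unfolding linear_code_def by blast

lemma lin_add: "linear_code n C0 \<Longrightarrow> p \<in> C0 \<Longrightarrow> q \<in> C0 \<Longrightarrow> addpt n p q \<in> C0"
  unfolding linear_code_def by blast

lemma M_trans:
  assumes lin: "linear_code n C0" and v: "(a mod n, b mod n) \<in> C0"
  shows "\<forall>c\<in>translate n x C0. \<exists>c'\<in>translate n x C0.
      (aff n 1 (-a) 1 (-b) c = c' \<and> aff n 1 (-a) 1 (-b) (addpt n c (1,0)) = addpt n c' (1,0))
    \<or> (aff n 1 (-a) 1 (-b) c = addpt n c' (1,0) \<and> aff n 1 (-a) 1 (-b) (addpt n c (1,0)) = c')"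
proof
  fix c assume "c \<in> translate n x C0"
  then obtain u where u: "u \<in> C0" "c = addpt n x u" unfolding translate_def by auto
  have w: "((-1 * (a mod n)) mod n, (-1*(b mod n)) mod n) \<in> C0"
    using lin_scale[OF lin v, of "-1"] by simp
  have "addpt n u ((-1 * (a mod n)) mod n, (-1*(b mod n)) mod n) \<in> C0"
    by (rule lin_add[OF lin u(1) w])
  then have "addpt n x (addpt n u ((-1 * (a mod n)) mod n, (-1*(b mod n)) mod n)) \<in> translate n x C0"
    unfolding translate_def by blast
  then show "\<exists>c'\<in>translate n x C0.
      (aff n 1 (-a) 1 (-b) c = c' \<and> aff n 1 (-a) 1 (-b) (addpt n c (1,0)) = addpt n c' (1,0))
    \<or> (aff n 1 (-a) 1 (-b) c = addpt n c' (1,0) \<and> aff n 1 (-a) 1 (-b) (addpt n c (1,0)) = c')"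
    using t_trans1 t_trans2 u(2) by blast
qed

lemma M_refl:
  assumes R: "\<forall>u\<in>C0. (fst u, (- snd u) mod n) \<in> C0"
  shows "\<forall>c\<in>translate n x C0. \<exists>c'\<in>translate n x C0.
      (aff n 1 0 (-1) (2 * snd x) c = c' \<and> aff n 1 0 (-1) (2 * snd x) (addpt n c (1,0)) = addpt n c' (1,0))
    \<or> (aff n 1 0 (-1) (2 * snd x) c = addpt n c' (1,0) \<and> aff n 1 0 (-1) (2 * snd x) (addpt n c (1,0)) = c')"
proof
  fix c assume "c \<in> translate n x C0"
  then obtain u where u: "u \<in> C0" "c = addpt n x u" unfolding translate_def by auto
  have "addpt n x (fst u, (- snd u) mod n) \<in> translate n x C0"
    using R u(1) unfolding translate_def by blast
  then show "\<exists>c'\<in>translate n x C0.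
      (aff n 1 0 (-1) (2 * snd x) c = c' \<and> aff n 1 0 (-1) (2 * snd x) (addpt n c (1,0)) = addpt n c' (1,0))
    \<or> (aff n 1 0 (-1) (2 * snd x) c = addpt n c' (1,0) \<and> aff n 1 0 (-1) (2 * snd x) (addpt n c (1,0)) = c')"
    using t_refl1 t_refl2 u(2) by blast
qed

lemma M_point:
  assumes lin: "linear_code n C0"
  shows "\<forall>c\<in>translate n x C0. \<exists>c'\<in>translate n x C0.
      (aff n (-1) (2 * fst x + 1) (-1) (2 * snd x) c = c' \<and> aff n (-1) (2 * fst x + 1) (-1) (2 * snd x) (addpt n c (1,0)) = addpt n c' (1,0))
    \<or> (aff n (-1) (2 * fst x + 1) (-1) (2 * snd x) c = addpt n c' (1,0) \<and> aff n (-1) (2 * fst x + 1) (-1) (2 * snd x) (addpt n c (1,0)) = c')"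
proof
  fix c assume "c \<in> translate n x C0"
  then obtain u where u: "u \<in> C0" "c = addpt n x u" unfolding translate_def by auto
  have "addpt n x ((-1 * fst u) mod n, (-1 * snd u) mod n) \<in> translate n x C0"
    using lin_scale[OF lin u(1)] unfolding translate_def by blast
  then show "\<exists>c'\<in>translate n x C0.
      (aff n (-1) (2 * fst x + 1) (-1) (2 * snd x) c = c' \<and> aff n (-1) (2 * fst x + 1) (-1) (2 * snd x) (addpt n c (1,0)) = addpt n c' (1,0))
    \<or> (aff n (-1) (2 * fst x + 1) (-1) (2 * snd x) c = addpt n c' (1,0) \<and> aff n (-1) (2 * fst x + 1) (-1) (2 * snd x) (addpt n c (1,0)) = c')"
    using t_pt1 t_pt2 u(2) by blast
qed

lemma act_trans:
  assumes n: "(n::int) > 0" and ab: "a \<ge> 0" "b \<ge> 0"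
  shows "\<forall>i\<in>{0..<n}. \<forall>j\<in>{0..<n}. (tau1 n ^^ nat a \<circ> tau2 n ^^ nat b) S i j
     = S ((1 * i + - a) mod n) ((1 * j + - b) mod n)"
proof (intro ballI)
  fix i j assume ij: "i \<in> {0..<n}" "j \<in> {0..<n}"
  have r: "(i - int (nat a)) mod n \<in> {0..<n}" using n by simp
  show "(tau1 n ^^ nat a \<circ> tau2 n ^^ nat b) S i j = S ((1 * i + - a) mod n) ((1 * j + - b) mod n)"
    using tau1_pow[OF n ij, of "nat a" "(tau2 n ^^ nat b) S"] tau2_pow[OF n r ij(2), of "nat b" S] ab
    by simp
qed

lemma act_tau2:
  assumes n: "(n::int) > 0" and b: "b \<ge> 0"
  shows "\<forall>i\<in>{0..<n}. \<forall>j\<in>{0..<n}. (tau2 n ^^ nat b) S i j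
     = S ((1 * i + - 0) mod n) ((1 * j + - b) mod n)"
  using tau2_pow[OF n] b by simp

lemma act_refl:
  assumes n: "(n::int) > 0" and x2: "x2 \<ge> 0"
  shows "\<forall>i\<in>{0..<n}. \<forall>j\<in>{0..<n}. (tau2 n ^^ nat (2 * x2 + 1) \<circ> sflip n) S i j
     = S ((1 * i + 0) mod n) ((-1 * j + 2 * x2) mod n)"
proof (intro ballI)
  fix i j assume ij: "i \<in> {0..<n}" "j \<in> {0..<n}"
  have "(tau2 n ^^ nat (2 * x2 + 1) \<circ> sflip n) S i j = sflip n S i ((j - (2 * x2 + 1)) mod n)"
    using tau2_pow[OF n ij, of "nat (2 * x2 + 1)" "sflip n S"] x2 by simp
  also have "\<dots> = S i ((n - 1 - (j - (2 * x2 + 1)) mod n) mod n)" using ij(1) by (simp add: sflip_def)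
  also have "\<dots> = S i ((-1 * j + 2 * x2) mod n)" by (simp add: nm)
  finally show "(tau2 n ^^ nat (2 * x2 + 1) \<circ> sflip n) S i j = S ((1 * i + 0) mod n) ((-1 * j + 2 * x2) mod n)"
    using ij by simp
qed

lemma act_point:
  assumes n: "(n::int) > 0" and x: "x1 \<ge> 0" "x2 \<ge> 0"
  shows "\<forall>i\<in>{0..<n}. \<forall>j\<in>{0..<n}. (tau1 n ^^ nat (2 * x1 + 2) \<circ> tau2 n ^^ nat (2 * x2 + 1) \<circ> rot n ^^ 2) S i j
     = S ((-1 * i + (2 * x1 + 1)) mod n) ((-1 * j + 2 * x2) mod n)"
proof (intro ballI)
  fix i j assume ij: "i \<in> {0..<n}" "j \<in> {0..<n}"
  have r1: "(i - (2 * x1 + 2)) mod n \<in> {0..<n}" using n by simp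
  have r2: "(j - (2 * x2 + 1)) mod n \<in> {0..<n}" using n by simp
  have "(tau1 n ^^ nat (2 * x1 + 2) \<circ> tau2 n ^^ nat (2 * x2 + 1) \<circ> rot n ^^ 2) S i j
      = (tau2 n ^^ nat (2 * x2 + 1)) ((rot n ^^ 2) S) ((i - (2 * x1 + 2)) mod n) j"
    using tau1_pow[OF n ij, of "nat (2 * x1 + 2)" "(tau2 n ^^ nat (2 * x2 + 1)) ((rot n ^^ 2) S)"] x by simp
  also have "\<dots> = (rot n ^^ 2) S ((i - (2 * x1 + 2)) mod n) ((j - (2 * x2 + 1)) mod n)"
    using tau2_pow[OF n r1 ij(2), of "nat (2 * x2 + 1)" "(rot n ^^ 2) S"] x by simp
  also have "\<dots> = S ((n - 1 - (i - (2 * x1 + 2)) mod n) mod n) ((n - 1 - (j - (2 * x2 + 1)) mod n) mod n)"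
    using rot2_at[OF n r1 r2] .
  also have "\<dots> = S ((-1 * i + (2 * x1 + 1)) mod n) ((-1 * j + 2 * x2) mod n)"
    by (simp only: nm, intro arg_cong2[where f=S] arg_cong[where f="\<lambda>z. z mod n"]) (simp_all add: algebra_simps)
  finally show "(tau1 n ^^ nat (2 * x1 + 2) \<circ> tau2 n ^^ nat (2 * x2 + 1) \<circ> rot n ^^ 2) S i j
     = S ((-1 * i + (2 * x1 + 1)) mod n) ((-1 * j + 2 * x2) mod n)" .
qed




theorem mainTheorem4:
  fixes t :: nat and n x1 x2 :: int and C0 C :: "(int \<times> int) set"
  assumes "t \<ge> 1"
    and "n = 2 * (int t + 1) ^ 2"
    and "linear_code n C0"
    and "dp_code n t C0"
    and "x1 \<in> {0..<n}" and "x2 \<in> {0..<n}"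
    and "C = translate n (x1, x2) C0"
  shows "(code_equiv C0 (caseI_code n t) \<longrightarrow>
           (\<forall>S\<in>sudoku_grids n t C. \<forall>g\<in>gen_group
              { tau1 n ^^ (t + 1) \<circ> tau2 n ^^ (t + 1),
                tau2 n ^^ (2 * (t + 1)),
                tau2 n ^^ nat (2 * x2 + 1) \<circ> sflip n,
                tau1 n ^^ nat (2 * x1 + 2) \<circ> tau2 n ^^ nat (2 * x2 + 1) \<circ> rot n ^^ 2 }.
              g S \<in> sudoku_grids n t C))
       \<and> (\<forall>a b. a \<in> {0..<n} \<longrightarrow> b \<in> {0..<n} \<longrightarrow>
           code_equiv C0 (caseII_code n t) \<longrightarrow> C0 = row_code n (a, b) \<longrightarrow>
           (\<forall>S\<in>sudoku_grids n t C. \<forall>g\<in>gen_group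
              { tau1 n ^^ nat a \<circ> tau2 n ^^ nat b,
                tau1 n ^^ nat (2 * x1 + 2) \<circ> tau2 n ^^ nat (2 * x2 + 1) \<circ> rot n ^^ 2 }.
              g S \<in> sudoku_grids n t C))"
proof -
  note lin = assms(3)
  have "(int t + 1) ^ 2 \<ge> 1" using assms(1) by simp
  then have n: "n \<ge> 2" using assms(2) by simp
  then have n0: "n > 0" by simp
  have x: "x1 \<ge> 0" "x2 \<ge> 0" using assms(5,6) by auto
  have C0z: "C0 \<subseteq> zn2 n" using lin unfolding linear_code_def by simp
  have U: "\<forall>p\<in>zn2 n. \<exists>!c. c \<in> C \<and> p \<in> anticode n t c"
    by (rule tiling[OF n C0z _ _ assms(7)]) (use assms(4) in \<open>simp_all add: dp_code_def\<close>)
  have one: "(1::int) \<in> {1,-1}" and mone: "(-1::int) \<in> {1,-1}" by simp_all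
  have Cx: "C = translate n (x1, x2) C0" by (rule assms(7))
  have Gpoint: "\<forall>S\<in>sudoku_grids n t C.
      (tau1 n ^^ nat (2 * x1 + 2) \<circ> tau2 n ^^ nat (2 * x2 + 1) \<circ> rot n ^^ 2) S \<in> sudoku_grids n t C"
  proof
    fix S assume S: "S \<in> sudoku_grids n t C"
    show "(tau1 n ^^ nat (2 * x1 + 2) \<circ> tau2 n ^^ nat (2 * x2 + 1) \<circ> rot n ^^ 2) S \<in> sudoku_grids n t C"
      by (rule transfer[OF n mone mone U _ S act_point[OF n0 x]])
        (use M_point[OF lin, of "(x1, x2)"] in \<open>simp only: Cx fst_conv snd_conv\<close>)
  qed
  have trans: "\<forall>S\<in>sudoku_grids n t C. (tau1 n ^^ nat a \<circ> tau2 n ^^ nat b) S \<in> sudoku_grids n t C"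
    if ab: "a \<ge> 0" "b \<ge> 0" "(a mod n, b mod n) \<in> C0" for a b
  proof
    fix S assume S: "S \<in> sudoku_grids n t C"
    show "(tau1 n ^^ nat a \<circ> tau2 n ^^ nat b) S \<in> sudoku_grids n t C"
      by (rule transfer[OF n one one U _ S act_trans[OF n0 ab(1,2)]])
        (use M_trans[OF lin ab(3), of "(x1, x2)"] in \<open>simp only: Cx fst_conv snd_conv\<close>)
  qed
  have partI: "\<forall>S\<in>sudoku_grids n t C. \<forall>g\<in>gen_group
              { tau1 n ^^ (t + 1) \<circ> tau2 n ^^ (t + 1),
                tau2 n ^^ (2 * (t + 1)),
                tau2 n ^^ nat (2 * x2 + 1) \<circ> sflip n,
                tau1 n ^^ nat (2 * x1 + 2) \<circ> tau2 n ^^ nat (2 * x2 + 1) \<circ> rot n ^^ 2 }.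
              g S \<in> sudoku_grids n t C" if ce: "code_equiv C0 (caseI_code n t)"
  proof -
    have C0I: "C0 = caseI_code n t" using caseI_eq[OF ce] .
    have v1: "((int t + 1) mod n, (int t + 1) mod n) \<in> C0" using caseI_mem1[where t=t and n=n] C0I by simp
    have t0: "int t + 1 \<ge> 0" by simp
    have G1': "\<forall>S\<in>sudoku_grids n t C. (tau1 n ^^ nat (int t + 1) \<circ> tau2 n ^^ nat (int t + 1)) S \<in> sudoku_grids n t C"
      by (rule trans[OF t0 t0 v1])
    have nt: "nat (int t + 1) = t + 1" by simp
    have G1: "\<forall>S\<in>sudoku_grids n t C. (tau1 n ^^ (t + 1) \<circ> tau2 n ^^ (t + 1)) S \<in> sudoku_grids n t C"
      using G1' unfolding nt .
    have G2: "\<forall>S\<in>sudoku_grids n t C. (tau2 n ^^ (2 * (t + 1))) S \<in> sudoku_grids n t C"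
    proof
      fix S assume S: "S \<in> sudoku_grids n t C"
      have b0: "0 \<le> 2 * (int t + 1)" by simp
      have v2: "(0 mod n, (2 * (int t + 1)) mod n) \<in> C0" using caseI_mem2[where t=t and n=n] C0I by simp
      have "(tau2 n ^^ nat (2 * (int t + 1))) S \<in> sudoku_grids n t C"
        by (rule transfer[OF n one one U _ S act_tau2[OF n0 b0]])
          (use M_trans[OF lin v2, of "(x1, x2)"] in \<open>simp only: Cx fst_conv snd_conv\<close>)
      moreover have "nat (2 * (int t + 1)) = 2 * (t + 1)" by simp
      ultimately show "(tau2 n ^^ (2 * (t + 1))) S \<in> sudoku_grids n t C" by simp
    qed
    have G3: "\<forall>S\<in>sudoku_grids n t C. (tau2 n ^^ nat (2 * x2 + 1) \<circ> sflip n) S \<in> sudoku_grids n t C"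
    proof
      fix S assume S: "S \<in> sudoku_grids n t C"
      have R: "\<forall>u\<in>C0. (fst u, (- snd u) mod n) \<in> C0"
      proof
        fix u assume "u \<in> C0"
        then show "(fst u, (- snd u) mod n) \<in> C0" using caseI_refl[of "fst u" "snd u" n t] C0I by simp
      qed
      show "(tau2 n ^^ nat (2 * x2 + 1) \<circ> sflip n) S \<in> sudoku_grids n t C"
        by (rule transfer[OF n one mone U _ S act_refl[OF n0 x(2)]])
          (use M_refl[OF R, of "(x1, x2)"] in \<open>simp only: Cx fst_conv snd_conv\<close>)
    qed
    have GG: "\<forall>g\<in>{ tau1 n ^^ (t + 1) \<circ> tau2 n ^^ (t + 1),
                tau2 n ^^ (2 * (t + 1)),
                tau2 n ^^ nat (2 * x2 + 1) \<circ> sflip n,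
                tau1 n ^^ nat (2 * x1 + 2) \<circ> tau2 n ^^ nat (2 * x2 + 1) \<circ> rot n ^^ 2 }.
           \<forall>S\<in>sudoku_grids n t C. g S \<in> sudoku_grids n t C"
      using G1 G2 G3 Gpoint by blast
    show ?thesis using gen_group_pres[OF GG] by blast
  qed
  have partII: "\<forall>S\<in>sudoku_grids n t C. \<forall>g\<in>gen_group
              { tau1 n ^^ nat a \<circ> tau2 n ^^ nat b,
                tau1 n ^^ nat (2 * x1 + 2) \<circ> tau2 n ^^ nat (2 * x2 + 1) \<circ> rot n ^^ 2 }.
              g S \<in> sudoku_grids n t C"
    if ab: "a \<in> {0..<n}" "b \<in> {0..<n}" "C0 = row_code n (a, b)" for a b
  proof -
    have "(a mod n, b mod n) \<in> row_code n (a, b)" unfolding row_code_def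
      by (rule CollectI, rule exI[of _ 1]) simp
    then have abC: "(a mod n, b mod n) \<in> C0" using ab(3) by simp
    have a0: "a \<ge> 0" "b \<ge> 0" using ab(1,2) by auto
    have G1: "\<forall>S\<in>sudoku_grids n t C. (tau1 n ^^ nat a \<circ> tau2 n ^^ nat b) S \<in> sudoku_grids n t C"
      by (rule trans[OF a0 abC])
    have GG: "\<forall>g\<in>{ tau1 n ^^ nat a \<circ> tau2 n ^^ nat b,
                tau1 n ^^ nat (2 * x1 + 2) \<circ> tau2 n ^^ nat (2 * x2 + 1) \<circ> rot n ^^ 2 }.
           \<forall>S\<in>sudoku_grids n t C. g S \<in> sudoku_grids n t C"
      using G1 Gpoint by blast
    show ?thesis using gen_group_pres[OF GG] by blast
  qed
  show ?thesis
    apply (intro conjI impI allI)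
     apply (erule partI)
    apply (rule partII; assumption)
    done
qed


end
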